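(* Let $n\ge 1$, $\theta\in(0,\pi)$, let $\chi_0$ be a positive definite $n\times n$ Hermitian matrix, let $\omega$ be an $n\times n$ Hermitian matrix with $\omega\in\Gamma_{\chi_0,\theta}$, and let $\epsilon_1>0$. Then there exists $\epsilon_2>0$ depending only on $\epsilon_1,\theta,n$ such that for every Hermitian matrix $\chi$ with $\chi_0\le\chi\le(1+\epsilon_2)\chi_0$ we have $\omega+2\epsilon_1\chi\in\Gamma_{\chi,\theta}$.
   Context: For a Hermitian matrix $\omega$ and a positive definite Hermitian matrix $\chi$, let $\lambda_1,\dots,\lambda_n$ be the eigenvalues of $\chi^{-1}\omega$ (the eigenvalues of $\omega$ with respect to $\chi$); $\mathrm{arccot}$ takes values in $(0,\pi)$. We write $\omega\in\Gamma_{\chi,\theta}$ if $\sum_{i\in I}\mathrm{arccot}(\lambda_i)<\theta$ for every $I\subset\{1,\dots,n\}$ with $|I|=n-1$. Inequalities between Hermitian matrices are in the sense of positive semidefiniteness. *)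

theory Defs
  imports Complex_Main "Jordan_Normal_Form.Schur_Decomposition"
    "Jordan_Normal_Form.Gauss_Jordan_Elimination" "Jordan_Normal_Form.Char_Poly"
begin

definition arccot :: "real \<Rightarrow> real" where
  "arccot x = pi / 2 - arctan x"

definition hermitian :: "nat \<Rightarrow> complex mat \<Rightarrow> bool" where
  "hermitian n A \<longleftrightarrow> A \<in> carrier_mat n n \<and> mat_adjoint A = A"

definition psd :: "nat \<Rightarrow> complex mat \<Rightarrow> bool" where
  "psd n A \<longleftrightarrow> hermitian n A \<and>
     (\<forall>v \<in> carrier_vec n. 0 \<le> Re ((A *\<^sub>v v) \<bullet>c v))"

definition pos_def :: "nat \<Rightarrow> complex mat \<Rightarrow> bool" where
  "pos_def n A \<longleftrightarrow> hermitian n A \<and>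
     (\<forall>v \<in> carrier_vec n. v \<noteq> 0\<^sub>v n \<longrightarrow> 0 < Re ((A *\<^sub>v v) \<bullet>c v))"

definition loewner_le :: "nat \<Rightarrow> complex mat \<Rightarrow> complex mat \<Rightarrow> bool" where
  "loewner_le n A B \<longleftrightarrow> A \<in> carrier_mat n n \<and> B \<in> carrier_mat n n \<and> psd n (B - A)"

definition rel_eigenvalues :: "complex mat \<Rightarrow> complex mat \<Rightarrow> complex multiset" where
  "rel_eigenvalues chi omega = proots (char_poly (the (mat_inverse chi) * omega))"

text \<open>omega \<in> Gamma_{chi,theta}: every sum of arccot over n-1 of the eigenvalues
  (i.e. omitting one eigenvalue, counted with multiplicity) is < theta.
  The eigenvalues are real; we take real parts.\<close>
definition in_Gamma :: "complex mat \<Rightarrow> real \<Rightarrow> complex mat \<Rightarrow> bool" where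
  "in_Gamma chi theta omega \<longleftrightarrow>
     (let M = rel_eigenvalues chi omega in
      \<forall>x \<in># M. sum_mset (image_mset (\<lambda>y. arccot (Re y)) (M - {#x#})) < theta)"

end

theory Submission
  imports Defs
begin

abbreviation adj :: "complex mat \<Rightarrow> complex mat" where "adj \<equiv> mat_adjoint"

lemma adj_dims[simp]: "dim_row (adj A) = dim_col A" "dim_col (adj A) = dim_row A"
  unfolding mat_adjoint_def by auto

lemma adj_carrier[simp]: "A \<in> carrier_mat n m \<Longrightarrow> adj A \<in> carrier_mat m n"
  unfolding carrier_mat_def by auto

lemma adj_index[simp]: "i < dim_col A \<Longrightarrow> j < dim_row A \<Longrightarrow> adj A $$ (i,j) = cnj (A $$ (j,i))"
  unfolding mat_adjoint_def by (simp add: mat_of_rows_def)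

lemma row_adj: "i < dim_col A \<Longrightarrow> row (adj A) i = conjugate (col A i)"
  by (rule eq_vecI, auto)

lemma adj_adj[simp]: "adj (adj A) = A"
  by (rule eq_matI, auto)

lemma adj_mult: assumes "A \<in> carrier_mat n m" "B \<in> carrier_mat m k"
  shows "adj (A * B) = adj B * adj A"
proof (rule eq_matI)
  fix i j assume ij: "i < dim_row (adj B * adj A)" "j < dim_col (adj B * adj A)"
  then have i: "i < k" and j: "j < n" using assms by auto
  show "adj (A * B) $$ (i, j) = (adj B * adj A) $$ (i, j)"
    using i j assms by (simp add: scalar_prod_def cnj_sum mult.commute)
qed (use assms in auto)

lemma adj_one[simp]: "adj (1\<^sub>m n) = 1\<^sub>m n"
  by (rule eq_matI, auto)

lemma adj_zero[simp]: "adj (0\<^sub>m n m) = 0\<^sub>m m n"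
  by (rule eq_matI, auto)

lemma adj_add: assumes "A \<in> carrier_mat n m" "B \<in> carrier_mat n m"
  shows "adj (A + B) = adj A + adj B"
  by (rule eq_matI, use assms in auto)

lemma adj_minus: assumes "A \<in> carrier_mat n m" "B \<in> carrier_mat n m"
  shows "adj (A - B) = adj A - adj B"
  by (rule eq_matI, use assms in auto)

lemma adj_smult: "adj (c \<cdot>\<^sub>m A) = cnj c \<cdot>\<^sub>m adj A"
  by (rule eq_matI, auto)

lemma cscalar_adj: assumes A: "A \<in> carrier_mat n m" and x: "x \<in> carrier_vec n" and y: "y \<in> carrier_vec m"
  shows "x \<bullet>c (A *\<^sub>v y) = (adj A *\<^sub>v x) \<bullet>c y"
proof -
  have "x \<bullet>c (A *\<^sub>v y) = (\<Sum>i<n. \<Sum>j<m. x $ i * cnj (A $$ (i,j)) * cnj (y $ j))"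
    using A x y by (simp add: scalar_prod_def cnj_sum sum_distrib_left mult.assoc lessThan_atLeast0)
  also have "\<dots> = (\<Sum>j<m. \<Sum>i<n. x $ i * cnj (A $$ (i,j)) * cnj (y $ j))"
    by (rule sum.swap)
  also have "\<dots> = (adj A *\<^sub>v x) \<bullet>c y"
    using A x y by (simp add: scalar_prod_def sum_distrib_left lessThan_atLeast0 ac_simps)
  finally show ?thesis .
qed

lemma adj_four_block: assumes "A \<in> carrier_mat n1 m1" "B \<in> carrier_mat n1 m2"
  "C \<in> carrier_mat n2 m1" "D \<in> carrier_mat n2 m2"
  shows "adj (four_block_mat A B C D) = four_block_mat (adj A) (adj C) (adj B) (adj D)"
  by (rule eq_matI, use assms in auto)

lemma cnorm_pos: fixes w :: "complex vec" assumes "w \<in> carrier_vec n" "w \<noteq> 0\<^sub>v n"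
  shows "Im (w \<bullet>c w) = 0" "Re (w \<bullet>c w) > 0"
proof -
  have "w \<bullet>c w > 0" using assms by simp
  then show "Im (w \<bullet>c w) = 0" "Re (w \<bullet>c w) > 0" by (auto simp: less_complex_def)
qed

lemma unitary_ext: fixes v :: "complex vec"
  assumes v: "v \<in> carrier_vec n" and v0: "v \<noteq> 0\<^sub>v n"
  shows "\<exists>W c. W \<in> carrier_mat n n \<and> adj W * W = 1\<^sub>m n \<and> col W 0 = c \<cdot>\<^sub>v v"
proof -
  interpret cof_vec_space n "TYPE(complex)" .
  define b where "b = basis_completion v"
  define ws where "ws = gram_schmidt n b"
  from basis_completion[OF v v0, folded b_def]
  have dist_b: "distinct b" and indep: "\<not> lin_dep (set b)" and b: "set b \<subseteq> carrier_vec n" and hdb: "hd b = v" 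
    and len_b: "length b = n" by auto
  have n: "n \<noteq> 0" using v0 v by auto
  from hdb len_b n obtain vs where bv: "b = v # vs" by (cases b, auto)
  from gram_schmidt_result[OF b dist_b indep refl, folded ws_def]
  have ws: "set ws \<subseteq> carrier_vec n" "corthogonal ws" "length ws = n" 
    by (auto simp: len_b)
  from gram_schmidt_hd[OF v, of vs, folded bv] have hdws: "hd ws = v" unfolding ws_def .
  have ws0: "ws ! 0 = v" using hdws ws(3) n by (cases ws, auto)
  define nr where "nr = (\<lambda>w::complex vec. complex_of_real (1 / sqrt (Re (w \<bullet>c w))))"
  define us where "us = map (\<lambda>w. nr w \<cdot>\<^sub>v w) ws"
  define W where "W = mat_of_cols n us"
  have wsi: "i < n \<Longrightarrow> ws ! i \<in> carrier_vec n" for i using ws by auto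
  have wsnz: "i < n \<Longrightarrow> ws ! i \<noteq> 0\<^sub>v n" for i
  proof
    assume i: "i < n" and z: "ws ! i = 0\<^sub>v n"
    have "ws ! i \<bullet>c ws ! i \<noteq> 0" using corthogonalD[OF ws(2), of i i] i ws(3) by auto
    with z show False by simp
  qed
  have usi: "i < n \<Longrightarrow> us ! i = nr (ws ! i) \<cdot>\<^sub>v ws ! i" for i unfolding us_def using ws by auto
  have us_carr: "set us \<subseteq> carrier_vec n" unfolding us_def using ws by auto
  have len_us: "length us = n" unfolding us_def using ws by auto
  have W: "W \<in> carrier_mat n n" unfolding W_def using us_carr len_us by auto
  have colW: "i < n \<Longrightarrow> col W i = us ! i" for i
    unfolding W_def using us_carr len_us by (intro col_mat_of_cols, auto)
  have orth: "us ! j \<bullet>c us ! i = (if i = j then 1 else 0)" if i: "i < n" and j: "j < n" for i j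
  proof -
    have "us ! j \<bullet>c us ! i = nr (ws ! j) * cnj (nr (ws ! i)) * (ws ! j \<bullet>c ws ! i)"
      using usi[OF i] usi[OF j] wsi[OF i] wsi[OF j]
      by (simp add: conjugate_smult_vec)
    also have "\<dots> = (if i = j then 1 else 0)"
    proof (cases "i = j")
      case True
      let ?w = "ws ! i"
      have im: "Im (?w \<bullet>c ?w) = 0" and re: "Re (?w \<bullet>c ?w) > 0"
        using cnorm_pos[OF wsi[OF i] wsnz[OF i]] by auto
      define r where "r = Re (?w \<bullet>c ?w)"
      have eq: "?w \<bullet>c ?w = complex_of_real r" using im unfolding r_def by (simp add: complex_eq_iff)
      have rp: "r > 0" using re unfolding r_def .
      have ss: "sqrt r * sqrt r = r" using rp by simp
      have "nr ?w * cnj (nr ?w) * (?w \<bullet>c ?w) = complex_of_real ((1 / sqrt r) * (1 / sqrt r) * r)"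
        unfolding nr_def r_def[symmetric] eq complex_cnj_complex_of_real of_real_mult[symmetric] Re_complex_of_real by (rule refl)
      also have "(1 / sqrt r) * (1 / sqrt r) * r = 1" using rp ss by (simp add: field_simps)
      finally show ?thesis using True by simp
    next
      case False
      have "ws ! j \<bullet>c ws ! i = 0" using corthogonalD[OF ws(2), of j i] i j ws(3) False by auto
      then show ?thesis using False by simp
    qed
    finally show ?thesis .
  qed
  have "adj W * W = 1\<^sub>m n"
  proof (rule eq_matI)
    fix i j assume "i < dim_row (1\<^sub>m n)" "j < dim_col (1\<^sub>m n)"
    then have i: "i < n" and j: "j < n" by auto
    have "(adj W * W) $$ (i, j) = row (adj W) i \<bullet> col W j" using W i j by simp
    also have "\<dots> = conjugate (us ! i) \<bullet> us ! j" using W i j us_carr len_us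
      by (simp add: row_adj colW)
    also have "\<dots> = us ! j \<bullet>c us ! i"
      by (rule comm_scalar_prod[of _ n], use us_carr len_us i j in \<open>auto intro!: carrier_vec_conjugate\<close>)
    finally show "(adj W * W) $$ (i, j) = 1\<^sub>m n $$ (i, j)" using orth[OF i j] i j by simp
  qed (use W in auto)
  moreover have "col W 0 = nr v \<cdot>\<^sub>v v" using colW[of 0] n usi[of 0] ws0 by simp
  ultimately show ?thesis using W by blast
qed

definition diagc :: "nat \<Rightarrow> (nat \<Rightarrow> real) \<Rightarrow> complex mat" where
  "diagc n d = mat n n (\<lambda>(i,j). if i = j then complex_of_real (d i) else 0)"

lemma diagc_carrier[simp]: "diagc n d \<in> carrier_mat n n" unfolding diagc_def by auto

lemma spectral: "hermitian n A \<Longrightarrow> \<exists>U d. U \<in> carrier_mat n n \<and> adj U * U = 1\<^sub>m n \<and> adj U * A * U = diagc n d"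
proof (induction n arbitrary: A)
  case 0
  then have A: "A \<in> carrier_mat 0 0" by (simp add: hermitian_def)
  show ?case
    by (rule exI[of _ "1\<^sub>m 0"], rule exI[of _ "\<lambda>_. 0"], use A in \<open>auto intro!: eq_matI simp: diagc_def\<close>)
next
  case (Suc m)
  define n where "n = Suc m"
  have A: "A \<in> carrier_mat n n" and hA: "adj A = A" using Suc.prems by (auto simp: hermitian_def n_def)
  obtain as where cp: "char_poly A = (\<Prod>a\<leftarrow>as. [:- a, 1:])" and len: "length as = n"
    using char_poly_factorized[OF A] by auto
  then obtain e es where as: "as = e # es" unfolding n_def by (cases as, auto)
  have ev: "eigenvalue A e" unfolding eigenvalue_root_char_poly[OF A] cp as by simp
  define v where "v = find_eigenvector A e"
  have "eigenvector A v e" unfolding v_def by (rule find_eigenvector[OF A ev])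
  then have v: "v \<in> carrier_vec n" and v0: "v \<noteq> 0\<^sub>v n" and Av: "A *\<^sub>v v = e \<cdot>\<^sub>v v"
    unfolding eigenvector_def using A by auto
  obtain W c where W: "W \<in> carrier_mat n n" and WW: "adj W * W = 1\<^sub>m n" and cW: "col W 0 = c \<cdot>\<^sub>v v"
    using unitary_ext[OF v v0] by blast
  define B where "B = adj W * A * W"
  have B: "B \<in> carrier_mat n n" unfolding B_def using W A by auto
  have hB: "adj B = B"
  proof -
    have e1: "adj B = adj W * adj (adj W * A)" unfolding B_def
      by (rule adj_mult[of _ n n], use W A in auto)
    have e2: "adj (adj W * A) = adj A * adj (adj W)" 
      by (rule adj_mult[of _ n n], use W A in auto)
    have "adj B = adj W * (adj A * adj (adj W))" using e1 e2 by simp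
    also have "\<dots> = B" unfolding B_def hA adj_adj using W A by (simp add: assoc_mult_mat[of _ n n _ n _ n])
    finally show ?thesis .
  qed
  have n0: "0 < n" unfolding n_def by simp
  have c1: "col B 0 = (adj W * A) *\<^sub>v col W 0" unfolding B_def by (rule col_mult2[of _ n n _ n], use W A n0 in auto)
  have c2: "(adj W * A) *\<^sub>v (c \<cdot>\<^sub>v v) = c \<cdot>\<^sub>v ((adj W * A) *\<^sub>v v)"
    by (rule mult_mat_vec[of _ n n], use W A v in auto)
  have c3: "(adj W * A) *\<^sub>v v = adj W *\<^sub>v (A *\<^sub>v v)"
    by (rule assoc_mult_mat_vec[of _ n n _ n], use W A v in auto)
  have c4: "adj W *\<^sub>v (e \<cdot>\<^sub>v v) = e \<cdot>\<^sub>v (adj W *\<^sub>v v)"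
    by (rule mult_mat_vec[of _ n n], use W A v in auto)
  have c5: "adj W *\<^sub>v (c \<cdot>\<^sub>v v) = c \<cdot>\<^sub>v (adj W *\<^sub>v v)"
    by (rule mult_mat_vec[of _ n n], use W A v in auto)
  have c6: "adj W *\<^sub>v col W 0 = col (adj W * W) 0" by (rule col_mult2[of _ n n _ n, symmetric], use W n0 in auto)
  have c7: "col (adj W * W) 0 = unit_vec n 0" unfolding WW using n0 by simp
  have "col B 0 = c \<cdot>\<^sub>v (e \<cdot>\<^sub>v (adj W *\<^sub>v v))" unfolding c1 cW c2 c3 Av c4 ..
  also have "\<dots> = e \<cdot>\<^sub>v (c \<cdot>\<^sub>v (adj W *\<^sub>v v))" by (simp add: smult_smult_assoc mult.commute)
  also have "\<dots> = e \<cdot>\<^sub>v unit_vec n 0" unfolding c5[symmetric] cW[symmetric] c6 c7 ..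
  finally have colB: "col B 0 = e \<cdot>\<^sub>v unit_vec n 0" .
  have Bi0: "i < n \<Longrightarrow> B $$ (i, 0) = (if i = 0 then e else 0)" for i
    using arg_cong[OF colB, of "\<lambda>x. x $ i"] B n0 by simp
  have B0j: "j < n \<Longrightarrow> B $$ (0, j) = (if j = 0 then cnj e else 0)" for j
  proof -
    assume j: "j < n"
    have "B $$ (0, j) = adj B $$ (0, j)" using hB by simp
    also have "\<dots> = cnj (B $$ (j, 0))" using B j n0 by simp
    finally show ?thesis using Bi0[OF j] by simp
  qed
  have ereal: "cnj e = e" using B0j[OF n0] Bi0[OF n0] by simp
  have "Im e = 0" using ereal by (simp add: complex_eq_iff)
  then have eR: "e = complex_of_real (Re e)" by (simp add: complex_eq_iff)
  define B3 where "B3 = mat m m (\<lambda>(i,j). B $$ (Suc i, Suc j))"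
  have B3: "B3 \<in> carrier_mat m m" unfolding B3_def by auto
  have hB3: "hermitian m B3" unfolding hermitian_def
  proof (intro conjI)
    show "adj B3 = B3"
    proof (rule eq_matI)
      fix i j assume "i < dim_row B3" "j < dim_col B3"
      then have i: "i < m" and j: "j < m" using B3 by auto
      have "adj B3 $$ (i, j) = cnj (B $$ (Suc j, Suc i))" using i j B3 unfolding B3_def by simp
      also have "\<dots> = adj B $$ (Suc i, Suc j)" using i j B unfolding n_def by simp
      also have "\<dots> = B3 $$ (i, j)" using i j hB unfolding B3_def by simp
      finally show "adj B3 $$ (i, j) = B3 $$ (i, j)" .
    qed (use B3 in auto)
  qed (rule B3)
  have Bblock: "B = four_block_mat (mat 1 1 (\<lambda>_. e)) (0\<^sub>m 1 m) (0\<^sub>m m 1) B3"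
  proof (rule eq_matI)
    fix i j assume "i < dim_row (four_block_mat (mat 1 1 (\<lambda>_. e)) (0\<^sub>m 1 m) (0\<^sub>m m 1) B3)"
      "j < dim_col (four_block_mat (mat 1 1 (\<lambda>_. e)) (0\<^sub>m 1 m) (0\<^sub>m m 1) B3)"
    then have i: "i < n" and j: "j < n" using B3 unfolding n_def by auto
    show "B $$ (i, j) = four_block_mat (mat 1 1 (\<lambda>_. e)) (0\<^sub>m 1 m) (0\<^sub>m m 1) B3 $$ (i, j)"
      using i j B3 Bi0[OF i] B0j[OF j] ereal unfolding n_def B3_def
      by (cases i; cases j; auto)
  qed (use B B3 n_def in auto)
  obtain U3 d3 where U3: "U3 \<in> carrier_mat m m" and UU3: "adj U3 * U3 = 1\<^sub>m m"
    and D3: "adj U3 * B3 * U3 = diagc m d3"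
    using Suc.IH[OF hB3] by blast
  define U1 where "U1 = four_block_mat (1\<^sub>m 1) (0\<^sub>m 1 m) (0\<^sub>m m 1) U3"
  have U1: "U1 \<in> carrier_mat n n" unfolding U1_def n_def using U3 by auto
  have aU1: "adj U1 = four_block_mat (1\<^sub>m 1) (0\<^sub>m 1 m) (0\<^sub>m m 1) (adj U3)"
    unfolding U1_def using U3 by (simp add: adj_four_block[of _ 1 1 _ m _ m])
  have UU1: "adj U1 * U1 = 1\<^sub>m n"
    unfolding aU1 unfolding U1_def using U3 UU3
    by (simp add: mult_four_block_mat[of _ 1 1 _ m _ m _ _ 1 _ m] n_def)
  have X: "adj U3 * B3 \<in> carrier_mat m m" using U3 B3 by (meson adj_carrier mult_carrier_mat)
  have X2: "adj U3 * B3 * U3 \<in> carrier_mat m m" using X U3 by (meson mult_carrier_mat)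
  have EE: "mat 1 1 (\<lambda>_. e) \<in> carrier_mat 1 1" by auto
  have D1: "adj U1 * B * U1 = four_block_mat (mat 1 1 (\<lambda>_. e)) (0\<^sub>m 1 m) (0\<^sub>m m 1) (diagc m d3)"
    unfolding aU1 Bblock unfolding U1_def using U3 B3 D3[symmetric] EE
    by (simp add: mult_four_block_mat[of _ 1 1 _ m _ m _ _ 1 _ m] X X2)
  define d where "d = (\<lambda>i. if i = 0 then Re e else d3 (i - 1))"
  have D1': "adj U1 * B * U1 = diagc n d"
    unfolding D1
  proof (rule eq_matI)
    fix i j assume "i < dim_row (diagc n d)" "j < dim_col (diagc n d)"
    then have i: "i < n" and j: "j < n" by (auto simp: diagc_def)
    show "four_block_mat (mat 1 1 (\<lambda>_. e)) (0\<^sub>m 1 m) (0\<^sub>m m 1) (diagc m d3) $$ (i, j) = diagc n d $$ (i, j)"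
      using i j eR unfolding n_def d_def diagc_def by (cases i; cases j; auto)
  qed (auto simp: diagc_def n_def)
  define U where "U = W * U1"
  have aW: "adj W \<in> carrier_mat n n" using W by simp
  have aU1c: "adj U1 \<in> carrier_mat n n" using U1 by simp
  have U: "U \<in> carrier_mat n n" unfolding U_def using W U1 by auto
  have aU: "adj U = adj U1 * adj W" unfolding U_def using W U1 by (simp add: adj_mult[of _ n n])
  have "adj U * U = (adj U1 * adj W) * (W * U1)" using aU U_def by simp
  also have "\<dots> = adj U1 * (adj W * (W * U1))"
    by (rule assoc_mult_mat[of _ n n _ n _ n], use aU1c aW W U1 in auto)
  also have "adj W * (W * U1) = (adj W * W) * U1"
    by (rule assoc_mult_mat[of _ n n _ n _ n, symmetric], use aU1c aW W U1 in auto)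
  also have "adj U1 * ((adj W * W) * U1) = adj U1 * (adj W * W) * U1"
    by (rule assoc_mult_mat[of _ n n _ n _ n, symmetric], use aU1c aW W U1 in auto)
  also have "\<dots> = 1\<^sub>m n" unfolding WW using U1 UU1 by simp
  finally have UU: "adj U * U = 1\<^sub>m n" .
  have "adj U * A * U = (adj U1 * adj W) * A * (W * U1)" using aU U_def by simp
  also have "\<dots> = (adj U1 * (adj W * A)) * (W * U1)"
    using assoc_mult_mat[OF aU1c aW A] by simp
  also have "\<dots> = adj U1 * ((adj W * A) * (W * U1))"
    by (rule assoc_mult_mat[of _ n n _ n _ n], use aU1c aW A W U1 in auto)
  also have "(adj W * A) * (W * U1) = ((adj W * A) * W) * U1"
    by (rule assoc_mult_mat[of _ n n _ n _ n, symmetric], use aU1c aW A W U1 in auto)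
  also have "adj U1 * (((adj W * A) * W) * U1) = (adj U1 * ((adj W * A) * W)) * U1"
    by (rule assoc_mult_mat[of _ n n _ n _ n, symmetric], use aU1c aW A W U1 in auto)
  also have "\<dots> = adj U1 * B * U1" unfolding B_def ..
  finally have "adj U * A * U = diagc n d" using D1' by simp
  then show ?case using U UU unfolding n_def by blast
qed

lemma quad_entry: assumes P: "P \<in> carrier_mat n k" and M: "M \<in> carrier_mat n n" and i: "i < k" and j: "j < k"
  shows "(adj P * M * P) $$ (i,j) = (M *\<^sub>v col P j) \<bullet>c col P i"
proof -
  have "(adj P * M * P) $$ (i,j) = col (adj P * M * P) j $ i" using P M i j by simp
  also have "col (adj P * M * P) j = (adj P * M) *\<^sub>v col P j"
    by (rule col_mult2[of _ k n], use P M j in auto)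
  also have "\<dots> = adj P *\<^sub>v (M *\<^sub>v col P j)"
    by (rule assoc_mult_mat_vec[of _ k n _ n], use P M in auto)
  also have "\<dots> $ i = row (adj P) i \<bullet> (M *\<^sub>v col P j)" using P i by simp
  also have "\<dots> = conjugate (col P i) \<bullet> (M *\<^sub>v col P j)" using P i by (simp add: row_adj)
  also have "\<dots> = (M *\<^sub>v col P j) \<bullet>c col P i"
    by (rule comm_scalar_prod[of _ n], use P M in auto)
  finally show ?thesis .
qed

lemma congr_mult: assumes P: "P \<in> carrier_mat n n" and Q: "Q \<in> carrier_mat n n" and M: "M \<in> carrier_mat n n"
  shows "adj (P * Q) * M * (P * Q) = adj Q * (adj P * M * P) * Q"
proof -
  have aP: "adj P \<in> carrier_mat n n" and aQ: "adj Q \<in> carrier_mat n n" using P Q by auto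
  have "adj (P * Q) = adj Q * adj P" by (rule adj_mult[of _ n n], use P Q in auto)
  then have "adj (P * Q) * M * (P * Q) = ((adj Q * adj P) * M) * (P * Q)" by simp
  also have "\<dots> = (adj Q * (adj P * M)) * (P * Q)"
    using assoc_mult_mat[OF aQ aP M] by simp
  also have "\<dots> = adj Q * ((adj P * M) * (P * Q))"
    by (rule assoc_mult_mat[of _ n n _ n _ n], use aP aQ P Q M in auto)
  also have "(adj P * M) * (P * Q) = ((adj P * M) * P) * Q"
    by (rule assoc_mult_mat[of _ n n _ n _ n, symmetric], use aP aQ P Q M in auto)
  also have "adj Q * (((adj P * M) * P) * Q) = (adj Q * ((adj P * M) * P)) * Q"
    by (rule assoc_mult_mat[of _ n n _ n _ n, symmetric], use aP aQ P Q M in auto)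
  finally show ?thesis .
qed

lemma hermitian_congr: assumes "hermitian n M" "P \<in> carrier_mat n k"
  shows "hermitian k (adj P * M * P)"
proof -
  have M: "M \<in> carrier_mat n n" and hM: "adj M = M" using assms by (auto simp: hermitian_def)
  have P: "P \<in> carrier_mat n k" by fact
  have e1: "adj (adj P * M * P) = adj P * adj (adj P * M)" by (rule adj_mult[of _ k n], use P M in auto)
  have e2: "adj (adj P * M) = adj M * P" using adj_mult[of "adj P" k n M n] P M by simp
  have "adj (adj P * M * P) = adj P * (M * P)" using e1 e2 hM by simp
  also have "\<dots> = adj P * M * P" using P M by (simp add: assoc_mult_mat[of _ k n _ n _ k])
  finally show ?thesis unfolding hermitian_def using P M by auto
qed

lemma diagc_mult: "diagc n a * diagc n b = diagc n (\<lambda>i. a i * b i)"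
proof (rule eq_matI)
  fix i j assume "i < dim_row (diagc n (\<lambda>i. a i * b i))" "j < dim_col (diagc n (\<lambda>i. a i * b i))"
  then have i: "i < n" and j: "j < n" by (auto simp: diagc_def)
  have "(diagc n a * diagc n b) $$ (i, j) = (\<Sum>k = 0..<n. diagc n a $$ (i,k) * diagc n b $$ (k,j))"
    using i j diagc_carrier[of n a] diagc_carrier[of n b] unfolding carrier_mat_def by (simp add: scalar_prod_def)
  also have "\<dots> = (\<Sum>k = 0..<n. if k = i then complex_of_real (a i) * diagc n b $$ (i,j) else 0)"
    by (rule sum.cong, use i j in \<open>auto simp: diagc_def\<close>)
  also have "\<dots> = complex_of_real (a i) * diagc n b $$ (i,j)" using i by simp
  also have "\<dots> = diagc n (\<lambda>i. a i * b i) $$ (i, j)" using i j by (simp add: diagc_def)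
  finally show "(diagc n a * diagc n b) $$ (i, j) = diagc n (\<lambda>i. a i * b i) $$ (i, j)" .
qed (auto simp: diagc_def)

lemma adj_diagc[simp]: "adj (diagc n a) = diagc n a"
  by (rule eq_matI, auto simp: diagc_def)

lemma diagc_one: "diagc n (\<lambda>_. 1) = 1\<^sub>m n"
  by (rule eq_matI, auto simp: diagc_def)

lemma gen_spectral: assumes chi: "pos_def n \<chi>" and om: "hermitian n \<omega>"
  shows "\<exists>V \<mu>. V \<in> carrier_mat n n \<and> adj V * \<chi> * V = 1\<^sub>m n \<and> adj V * \<omega> * V = diagc n \<mu>"
proof -
  have hchi: "hermitian n \<chi>" and C: "\<chi> \<in> carrier_mat n n" using chi by (auto simp: pos_def_def hermitian_def)
  have O: "\<omega> \<in> carrier_mat n n" using om by (auto simp: hermitian_def)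
  obtain U d where U: "U \<in> carrier_mat n n" and UU: "adj U * U = 1\<^sub>m n" and D: "adj U * \<chi> * U = diagc n d"
    using spectral[OF hchi] by blast
  have dpos: "d i > 0" if i: "i < n" for i
  proof -
    have "1 = (adj U * 1\<^sub>m n * U) $$ (i,i)" using UU U i by simp
    also have "\<dots> = (1\<^sub>m n *\<^sub>v col U i) \<bullet>c col U i" by (rule quad_entry, use U i in auto)
    also have "\<dots> = col U i \<bullet>c col U i" using U i by (subst one_mult_mat_vec[of _ n], auto)
    finally have "col U i \<noteq> 0\<^sub>v n" by auto
    then have "0 < Re ((\<chi> *\<^sub>v col U i) \<bullet>c col U i)" using chi U unfolding pos_def_def by auto
    also have "(\<chi> *\<^sub>v col U i) \<bullet>c col U i = (adj U * \<chi> * U) $$ (i,i)"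
      by (rule quad_entry[symmetric], use U C i in auto)
    also have "\<dots> = complex_of_real (d i)" using D i by (simp add: diagc_def)
    finally show ?thesis by simp
  qed
  define S where "S = U * diagc n (\<lambda>i. 1 / sqrt (d i))"
  have S: "S \<in> carrier_mat n n" unfolding S_def using U by auto
  have SCS: "adj S * \<chi> * S = 1\<^sub>m n"
  proof -
    have "adj S * \<chi> * S = diagc n (\<lambda>i. 1 / sqrt (d i)) * diagc n d * diagc n (\<lambda>i. 1 / sqrt (d i))"
      unfolding S_def using congr_mult[OF U _ C, of "diagc n (\<lambda>i. 1 / sqrt (d i))"] D by simp
    also have "\<dots> = diagc n (\<lambda>i. 1 / sqrt (d i) * d i * (1 / sqrt (d i)))" by (simp add: diagc_mult)
    also have "(\<lambda>i. 1 / sqrt (d i) * d i * (1 / sqrt (d i))) = (\<lambda>i. if i < n then 1 else 1 / sqrt (d i) * d i * (1 / sqrt (d i)))"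
      using dpos by (intro ext, force)
    also have "diagc n \<dots> = diagc n (\<lambda>_. 1)" by (rule eq_matI, auto simp: diagc_def)
    finally show ?thesis by (simp add: diagc_one)
  qed
  define B where "B = adj S * \<omega> * S"
  have hB: "hermitian n B" unfolding B_def by (rule hermitian_congr[OF om S])
  obtain U2 \<mu> where U2: "U2 \<in> carrier_mat n n" and UU2: "adj U2 * U2 = 1\<^sub>m n" and D2: "adj U2 * B * U2 = diagc n \<mu>"
    using spectral[OF hB] by blast
  define V where "V = S * U2"
  have V: "V \<in> carrier_mat n n" unfolding V_def using S U2 by auto
  have "adj V * \<chi> * V = 1\<^sub>m n" unfolding V_def using congr_mult[OF S U2 C] SCS UU2 U2 by simp
  moreover have "adj V * \<omega> * V = diagc n \<mu>" unfolding V_def using congr_mult[OF S U2 O] D2 B_def by simp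
  ultimately show ?thesis using V by blast
qed

lemma proots_linprod: "proots (\<Prod>a\<leftarrow>as. [:- a, 1:]) = mset (as :: complex list)"
proof (induction as)
  case (Cons a as)
  have nz: "(\<Prod>a\<leftarrow>as. [:- a, 1:]) \<noteq> (0 :: complex poly)"
    by (auto simp: prod_list_zero_iff)
  have "proots (\<Prod>x\<leftarrow>a#as. [:- x, 1:]) = proots ([:- a, 1:] * (\<Prod>x\<leftarrow>as. [:- x, 1:]))" by simp
  also have "\<dots> = proots [:- a, 1:] + proots (\<Prod>x\<leftarrow>as. [:- x, 1:])" by (rule proots_mult, use nz in auto)
  also have "proots [:- a, 1:] = {#a#}" using proots_linear_factor[of "-a"] by simp
  finally show ?case using Cons by simp
qed simp

lemma wide_kernel: fixes A :: "complex mat" assumes A: "A \<in> carrier_mat n (Suc n)"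
  shows "\<exists>x \<in> carrier_vec (Suc n). x \<noteq> 0\<^sub>v (Suc n) \<and> A *\<^sub>v x = 0\<^sub>v n"
proof -
  define Y where "Y = mat\<^sub>r (Suc n) (Suc n) (\<lambda>i. if i = n then 0\<^sub>v (Suc n) else row A i)"
  have "det Y = 0" unfolding Y_def
  proof (rule det_row_0)
    have "dim_col A = Suc n" using A by simp
    then show "(\<lambda>i. row A i) \<in> {0..<Suc n} \<rightarrow> carrier_vec (Suc n)" using row_carrier[of A] by auto
  qed simp
  then obtain x where x: "x \<in> carrier_vec (Suc n)" and x0: "x \<noteq> 0\<^sub>v (Suc n)" and Yx: "Y *\<^sub>v x = 0\<^sub>v (Suc n)"
    using det_0_iff_vec_prod_zero[of Y "Suc n"] unfolding Y_def by auto
  have "A *\<^sub>v x = 0\<^sub>v n"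
  proof (rule eq_vecI)
    fix i assume "i < dim_vec (0\<^sub>v n :: complex vec)"
    then have i: "i < n" by simp
    have "(Y *\<^sub>v x) $ i = 0" using Yx i by simp
    moreover have "(Y *\<^sub>v x) $ i = row A i \<bullet> x" using i A unfolding Y_def by simp
    ultimately show "(A *\<^sub>v x) $ i = 0\<^sub>v n $ i" using i A by simp
  qed (use A in simp)
  then show ?thesis using x x0 by blast
qed

lemma rel_eig: assumes C: "\<chi> \<in> carrier_mat n n" and O: "\<omega> \<in> carrier_mat n n" and V: "V \<in> carrier_mat n n"
  and VCV: "adj V * \<chi> * V = 1\<^sub>m n" and VOV: "adj V * \<omega> * V = diagc n \<mu>"
  shows "rel_eigenvalues \<chi> \<omega> = mset (map (\<lambda>i. complex_of_real (\<mu> i)) [0..<n])"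
proof -
  have aV: "adj V \<in> carrier_mat n n" using V by simp
  have aVC: "adj V * \<chi> \<in> carrier_mat n n" using aV C by (meson mult_carrier_mat)
  define X where "X = V * adj V"
  have X: "X \<in> carrier_mat n n" unfolding X_def using V aV by (meson mult_carrier_mat)
  have VQ: "V * (adj V * \<chi>) = 1\<^sub>m n" by (rule mat_mult_left_right_inverse[OF aVC V VCV])
  have XC: "X * \<chi> = 1\<^sub>m n" unfolding X_def using VQ assoc_mult_mat[OF V aV C] by simp
  have CX: "\<chi> * X = 1\<^sub>m n" by (rule mat_mult_left_right_inverse[OF X C XC])
  have inv: "the (mat_inverse \<chi>) = X"
  proof (cases "mat_inverse \<chi>")
    case None
    from mat_inverse(1)[OF C None, of undefined] have "\<chi> \<notin> Units (ring_mat TYPE(complex) n undefined)" .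
    moreover have "\<chi> \<in> Units (ring_mat TYPE(complex) n undefined)"
      unfolding Units_def ring_mat_def using C X XC CX by auto
    ultimately show ?thesis by blast
  next
    case (Some Y)
    from mat_inverse(2)[OF C Some] have CY: "\<chi> * Y = 1\<^sub>m n" and YC: "Y * \<chi> = 1\<^sub>m n" and Y: "Y \<in> carrier_mat n n" by auto
    have "Y = Y * (\<chi> * X)" using CX Y by simp
    also have "\<dots> = (Y * \<chi>) * X" using Y C X by simp
    also have "\<dots> = X" using YC X by simp
    finally show ?thesis using Some by simp
  qed
  have sim: "similar_mat (X * \<omega>) (diagc n \<mu>)"
    unfolding similar_mat_def
  proof (intro exI)
    show "similar_mat_wit (X * \<omega>) (diagc n \<mu>) V (adj V * \<chi>)"
      unfolding similar_mat_wit_def Let_def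
    proof (intro conjI)
      show "{X * \<omega>, diagc n \<mu>, V, adj V * \<chi>} \<subseteq> carrier_mat (dim_row (X * \<omega>)) (dim_row (X * \<omega>))"
        using X O V aVC by auto
      show "V * (adj V * \<chi>) = 1\<^sub>m (dim_row (X * \<omega>))" using VQ X by simp
      show "adj V * \<chi> * V = 1\<^sub>m (dim_row (X * \<omega>))" using VCV X by simp
      show "X * \<omega> = V * diagc n \<mu> * (adj V * \<chi>)"
      proof -
        have aVO: "adj V * \<omega> \<in> carrier_mat n n" using aV O by (meson mult_carrier_mat)
        have "V * (adj V * \<omega> * V) * (adj V * \<chi>) = V * ((adj V * \<omega> * V) * (adj V * \<chi>))"
          by (rule assoc_mult_mat[of _ n n _ n _ n], use V aVO aVC in auto)
        also have "(adj V * \<omega> * V) * (adj V * \<chi>) = (adj V * \<omega>) * (V * (adj V * \<chi>))"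
          by (rule assoc_mult_mat[of _ n n _ n _ n], use V aVO aVC in auto)
        also have "\<dots> = adj V * \<omega>" unfolding VQ by (rule right_mult_one_mat[OF aVO])
        also have "V * (adj V * \<omega>) = X * \<omega>" unfolding X_def
          by (rule assoc_mult_mat[of _ n n _ n _ n, symmetric], use V aV O in auto)
        finally show ?thesis unfolding VOV[symmetric] by simp
      qed
    qed
  qed
  have diag: "diag_mat (diagc n \<mu>) = map (\<lambda>i. complex_of_real (\<mu> i)) [0..<n]"
    unfolding diag_mat_def diagc_def by simp
  have ut: "upper_triangular (diagc n \<mu>)" unfolding upper_triangular_def diagc_def by auto
  have "rel_eigenvalues \<chi> \<omega> = proots (char_poly (diagc n \<mu>))"
    unfolding rel_eigenvalues_def inv char_poly_similar[OF sim] ..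
  also have "char_poly (diagc n \<mu>) = (\<Prod>a\<leftarrow>map (\<lambda>i. complex_of_real (\<mu> i)) [0..<n]. [:- a, 1:])"
    using char_poly_upper_triangular[OF diagc_carrier ut] diag by simp
  finally show ?thesis by (simp only: proots_linprod)
qed

lemma arctan_mvt: assumes "a < b"
  shows "\<exists>z. a < z \<and> z < b \<and> arctan b - arctan a = (b - a) / (1 + z^2)"
proof -
  have d: "\<And>x. a \<le> x \<Longrightarrow> x \<le> b \<Longrightarrow> DERIV arctan x :> inverse (1 + x^2)" using DERIV_arctan by blast
  from MVT2[OF assms d] obtain z where "a < z" "z < b" "arctan b - arctan a = (b - a) * inverse (1 + z^2)"
    by blast
  then show ?thesis by (auto simp: divide_inverse)
qed

lemma arctan_diff_lower: assumes ab: "a \<le> b" and Ra: "\<bar>a\<bar> \<le> R" and Rb: "\<bar>b\<bar> \<le> R"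
  shows "(b - a) / (1 + R^2) \<le> arctan b - arctan a"
proof (cases "a = b")
  case False
  then have "a < b" using ab by simp
  from arctan_mvt[OF this] obtain z where z: "a < z" "z < b" and eq: "arctan b - arctan a = (b - a) / (1 + z^2)" by blast
  have "\<bar>z\<bar> \<le> R" using z Ra Rb by auto
  then have "z^2 \<le> R^2" by (metis abs_ge_zero power2_abs power_mono)
  then have "(b - a) / (1 + R^2) \<le> (b - a) / (1 + z^2)" using ab
    by (intro divide_left_mono) (auto simp: add_pos_nonneg)
  then show ?thesis using eq by simp
qed simp

lemma arctan_diff_upper: assumes a0: "0 \<le> a" and ab: "a \<le> b"
  shows "arctan b - arctan a \<le> (b - a) / (1 + a^2)"
proof (cases "a = b")
  case False
  then have "a < b" using ab by simp
  from arctan_mvt[OF this] obtain z where z: "a < z" "z < b" and eq: "arctan b - arctan a = (b - a) / (1 + z^2)" by blast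
  have "a^2 \<le> z^2" using z a0 by (intro power_mono) auto
  then have "(b - a) / (1 + z^2) \<le> (b - a) / (1 + a^2)" using ab
    by (intro divide_left_mono) (auto simp: add_pos_nonneg)
  then show ?thesis using eq by simp
qed simp

lemma arccot_pos: "0 < arccot x"
  unfolding arccot_def using arctan_ubound[of x] by simp

lemma arccot_antimono: "x \<le> y \<Longrightarrow> arccot y \<le> arccot x"
  unfolding arccot_def by (simp add: arctan_le_iff)

lemma arccot_inv: assumes "x > 0" shows "arccot x = arctan (1 / x)"
  unfolding arccot_def using arctan_inverse[of x] assms by simp

lemma arccot_le_inv: assumes "x > 0" shows "arccot x \<le> 1 / x"
proof -
  have "arctan (1/x) - arctan 0 \<le> (1/x - 0) / (1 + 0^2)"
    by (rule arctan_diff_upper, use assms in auto)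
  then show ?thesis using arccot_inv[OF assms] by simp
qed

lemma arccot_neg_ge: assumes "x < 0" shows "pi + 1 / x \<le> arccot x"
proof -
  have "arccot x = pi - arccot (- x)" unfolding arccot_def by (simp add: arctan_minus)
  moreover have "arccot (- x) \<le> 1 / (- x)" by (rule arccot_le_inv, use assms in auto)
  ultimately show ?thesis by simp
qed

definition Fe :: "real \<Rightarrow> real \<Rightarrow> real" where
  "Fe e t = (if 0 \<le> t then t / (1 + e) else t)"

lemma analytic:
  fixes \<theta> \<epsilon>1 :: real and N :: nat
  assumes th0: "0 < \<theta>" and thpi: "\<theta> < pi" and e1: "0 < \<epsilon>1"
  shows "\<exists>\<epsilon>2>0. \<forall>(I::nat set) l m. finite I \<longrightarrow> card I \<le> N \<longrightarrow> (\<Sum>i\<in>I. arccot (l i)) < \<theta> \<longrightarrow>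
           (\<forall>i\<in>I. Fe \<epsilon>2 (l i) \<le> m i) \<longrightarrow> (\<Sum>i\<in>I. arccot (m i + 2 * \<epsilon>1)) < \<theta>"
proof -
  define K where "K = 2 * (real N + 1) / \<theta>"
  define L where "L = - 1 / (pi - \<theta>)"
  define R where "R = \<bar>L\<bar> + K + \<epsilon>1"
  define c where "c = \<epsilon>1 / (1 + R^2)"
  define e where "e = min 1 (min (\<epsilon>1 / K) (c / (real N + 1)))"
  have K0: "K > 0" unfolding K_def using th0 by simp
  have L0: "L < 0" unfolding L_def using thpi by simp
  have c0: "c > 0" unfolding c_def using e1 by (simp add: add_pos_nonneg)
  have e0: "e > 0" unfolding e_def using e1 K0 c0 by simp
  have e1': "e \<le> 1" unfolding e_def by simp
  have "e \<le> \<epsilon>1 / K" unfolding e_def by simp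
  then have eK: "e * K \<le> \<epsilon>1" using K0 by (simp add: le_divide_eq)
  have "e \<le> c / (real N + 1)" unfolding e_def by simp
  then have ec: "e * (real N + 1) \<le> c" by (simp add: le_divide_eq)
  have main: "(\<Sum>i\<in>I. arccot (m i + 2 * \<epsilon>1)) < \<theta>"
    if I: "finite I" and cI: "card I \<le> N" and S: "(\<Sum>i\<in>I. arccot (l i)) < \<theta>"
      and Fm: "\<forall>i\<in>I. Fe e (l i) \<le> m i" for I l m
  proof -
    define G where "G = (\<lambda>i. arccot (m i + 2 * \<epsilon>1))"
    have GF: "G i \<le> arccot (Fe e (l i))" if "i \<in> I" for i
      unfolding G_def by (rule arccot_antimono, use Fm that e1 in auto)
    have g1: "G i \<le> arccot (l i) + e" if i: "i \<in> I" for i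
    proof (cases "0 \<le> l i")
      case True
      define a where "a = l i / (1 + e)"
      have a0: "0 \<le> a" unfolding a_def using True e0 by simp
      have al: "a \<le> l i" unfolding a_def using True e0 by (simp add: field_simps)
      have la: "l i - a = e * a" unfolding a_def using e0 by (simp add: field_simps)
      have "arccot a - arccot (l i) = arctan (l i) - arctan a" unfolding arccot_def by simp
      also have "\<dots> \<le> (l i - a) / (1 + a^2)" by (rule arctan_diff_upper[OF a0 al])
      also have "\<dots> = e * (a / (1 + a^2))" unfolding la by simp
      also have "\<dots> \<le> e * 1"
      proof (rule mult_left_mono)
        have h1: "0 \<le> (a - 1)^2" by simp
        have h2: "(a - 1)^2 = a^2 - 2*a + 1" by (simp add: power2_eq_square algebra_simps)
        have "a \<le> 1 + a^2" using h1 h2 a0 by linarith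
        then show "a / (1 + a^2) \<le> 1" by (simp add: add_pos_nonneg)
      qed (use e0 in simp)
      finally have "arccot a \<le> arccot (l i) + e" by simp
      moreover have "Fe e (l i) = a" unfolding Fe_def a_def using True by simp
      ultimately show ?thesis using GF[OF i] by simp
    next
      case False
      then have "Fe e (l i) = l i" unfolding Fe_def by simp
      then show ?thesis using GF[OF i] e0 by simp
    qed
    show ?thesis
    proof (cases "\<forall>i\<in>I. K \<le> l i")
      case True
      have "G i \<le> \<theta> / (real N + 1)" if i: "i \<in> I" for i
      proof -
        have Ke: "K * e \<le> K * 1" using e1' K0 by (intro mult_left_mono) auto
        have Kl: "K \<le> l i" using True i by blast
        have "K / 2 \<le> l i / (1 + e)" using Kl e0 Ke
          by (simp add: field_simps)
        then have "K / 2 \<le> Fe e (l i)" unfolding Fe_def using True i K0 by auto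
        then have "arccot (Fe e (l i)) \<le> arccot (K / 2)" by (rule arccot_antimono)
        also have "\<dots> \<le> 1 / (K / 2)" by (rule arccot_le_inv, use K0 in simp)
        also have "\<dots> = \<theta> / (real N + 1)" unfolding K_def using th0 by (simp add: field_simps)
        finally show ?thesis using GF[OF i] by simp
      qed
      then have "(\<Sum>i\<in>I. G i) \<le> real (card I) * (\<theta> / (real N + 1))"
        using sum_bounded_above[of I G "\<theta> / (real N + 1)"] by simp
      also have "\<dots> \<le> real N * (\<theta> / (real N + 1))"
        using cI th0 by (intro mult_right_mono) auto
      also have "\<dots> < \<theta>" using th0 by (simp add: field_simps)
      finally show ?thesis unfolding G_def .
    next
      case False
      then obtain i0 where i0: "i0 \<in> I" and lK: "l i0 < K" by auto
      have pos: "\<And>i. 0 \<le> arccot (l i)" using arccot_pos less_imp_le by blast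
      have "arccot (l i0) \<le> (\<Sum>i\<in>I. arccot (l i))"
        by (rule member_le_sum[OF i0 _ I], use pos in auto)
      then have li0th: "arccot (l i0) < \<theta>" using S by simp
      have lL: "L < l i0"
      proof (rule ccontr)
        assume "\<not> L < l i0"
        then have le: "l i0 \<le> L" by simp
        then have neg: "l i0 < 0" using L0 by simp
        have "1 / l i0 \<ge> 1 / L" using le neg L0 by (simp add: divide_left_mono_neg field_simps)
        moreover have "1 / L = - (pi - \<theta>)" unfolding L_def using thpi by simp
        ultimately have "\<theta> \<le> pi + 1 / l i0" by simp
        also have "\<dots> \<le> arccot (l i0)" by (rule arccot_neg_ge[OF neg])
        finally show False using li0th by simp
      qed
      have step1: "l i0 + \<epsilon>1 \<le> Fe e (l i0) + 2 * \<epsilon>1"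
      proof (cases "0 \<le> l i0")
        case True
        have "l i0 - l i0 / (1 + e) = e * l i0 / (1 + e)" using e0 by (simp add: field_simps)
        also have "\<dots> \<le> e * l i0" using e0 True by (simp add: field_simps mult_left_mono)
        also have "\<dots> \<le> e * K" using lK e0 by simp
        finally show ?thesis using eK True unfolding Fe_def by simp
      qed (use e1 in \<open>simp add: Fe_def\<close>)
      have Gi0: "G i0 \<le> arccot (l i0 + \<epsilon>1)"
        unfolding G_def by (rule arccot_antimono, use Fm i0 step1 in auto)
      have "((l i0 + \<epsilon>1) - l i0) / (1 + R^2) \<le> arctan (l i0 + \<epsilon>1) - arctan (l i0)"
        by (rule arctan_diff_lower[of "l i0" "l i0 + \<epsilon>1" R], use e1 lL lK L0 K0 in \<open>auto simp: R_def\<close>)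
      then have "arccot (l i0 + \<epsilon>1) \<le> arccot (l i0) - c" unfolding arccot_def c_def by simp
      then have Gi0': "G i0 \<le> arccot (l i0) - c" using Gi0 by simp
      have "(\<Sum>i\<in>I. G i) = G i0 + (\<Sum>i\<in>I - {i0}. G i)" by (rule sum.remove[OF I i0])
      also have "(\<Sum>i\<in>I - {i0}. G i) \<le> (\<Sum>i\<in>I - {i0}. arccot (l i) + e)"
        by (rule sum_mono, use g1 in auto)
      also have "\<dots> = (\<Sum>i\<in>I - {i0}. arccot (l i)) + real (card (I - {i0})) * e"
        by (simp add: sum.distrib)
      also have "real (card (I - {i0})) * e \<le> real N * e"
        using cI card_Diff1_le[of I i0] I e0 by (intro mult_right_mono) auto
      also have "real N * e \<le> c" using ec e0 by (simp add: algebra_simps)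
      finally have "(\<Sum>i\<in>I. G i) \<le> G i0 + (\<Sum>i\<in>I - {i0}. arccot (l i)) + c" by simp
      also have "\<dots> \<le> arccot (l i0) + (\<Sum>i\<in>I - {i0}. arccot (l i))" using Gi0' by simp
      also have "\<dots> = (\<Sum>i\<in>I. arccot (l i))" by (rule sum.remove[OF I i0, symmetric])
      finally show ?thesis unfolding G_def using S by simp
    qed
  qed
  show ?thesis using e0 main by blast
qed

lemma qf_congr: assumes P: "P \<in> carrier_mat n n" and M: "M \<in> carrier_mat n n" and a: "a \<in> carrier_vec n"
  shows "(M *\<^sub>v (P *\<^sub>v a)) \<bullet>c (P *\<^sub>v a) = ((adj P * M * P) *\<^sub>v a) \<bullet>c a"
proof -
  have "(M *\<^sub>v (P *\<^sub>v a)) \<bullet>c (P *\<^sub>v a) = (adj P *\<^sub>v (M *\<^sub>v (P *\<^sub>v a))) \<bullet>c a"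
    by (rule cscalar_adj[of P n n], use P M a in auto)
  also have "adj P *\<^sub>v (M *\<^sub>v (P *\<^sub>v a)) = (adj P * M) *\<^sub>v (P *\<^sub>v a)"
    by (rule assoc_mult_mat_vec[symmetric, of _ n n _ n], use P M a in auto)
  also have "\<dots> = (adj P * M * P) *\<^sub>v a"
    by (rule assoc_mult_mat_vec[symmetric, of _ n n _ n], use P M a in auto)
  finally show ?thesis .
qed

lemma diagc_mult_vec: assumes a: "a \<in> carrier_vec n"
  shows "diagc n d *\<^sub>v a = vec n (\<lambda>i. complex_of_real (d i) * a $ i)"
proof (rule eq_vecI)
  fix i assume "i < dim_vec (vec n (\<lambda>i. complex_of_real (d i) * a $ i))"
  then have i: "i < n" by simp
  have "(diagc n d *\<^sub>v a) $ i = (\<Sum>k = 0..<n. diagc n d $$ (i,k) * a $ k)"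
    using i a diagc_carrier[of n d] unfolding carrier_mat_def carrier_vec_def by (simp add: scalar_prod_def)
  also have "\<dots> = (\<Sum>k = 0..<n. if k = i then complex_of_real (d i) * a $ i else 0)"
    by (rule sum.cong, use i in \<open>auto simp: diagc_def\<close>)
  also have "\<dots> = complex_of_real (d i) * a $ i" using i by simp
  finally show "(diagc n d *\<^sub>v a) $ i = vec n (\<lambda>i. complex_of_real (d i) * a $ i) $ i" using i by simp
qed (simp add: diagc_def)

lemma diag_form: assumes a: "a \<in> carrier_vec n"
  shows "Re ((diagc n d *\<^sub>v a) \<bullet>c a) = (\<Sum>i<n. d i * (cmod (a $ i))^2)"
proof -
  have "(diagc n d *\<^sub>v a) \<bullet>c a = (\<Sum>i = 0..<n. complex_of_real (d i) * (a $ i * cnj (a $ i)))"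
    unfolding diagc_mult_vec[OF a] using a by (simp add: scalar_prod_def mult.assoc)
  also have "\<dots> = (\<Sum>i = 0..<n. complex_of_real (d i * (cmod (a $ i))^2))"
    by (rule sum.cong, simp_all add: complex_norm_square[symmetric])
  finally show ?thesis by (simp add: Re_sum lessThan_atLeast0)
qed

lemma one_form: assumes a: "a \<in> carrier_vec n"
  shows "Re ((1\<^sub>m n *\<^sub>v a) \<bullet>c a) = (\<Sum>i<n. (cmod (a $ i))^2)"
  using diag_form[OF a, of "\<lambda>_. 1"] by (simp add: diagc_one)

lemma sum_sq_pos: assumes a: "a \<in> carrier_vec n" and a0: "a \<noteq> 0\<^sub>v n"
  shows "0 < (\<Sum>i<n. (cmod (a $ i))^2)"
proof -
  obtain i where i: "i < n" and ai: "a $ i \<noteq> 0" using a a0 by (metis eq_vecI carrier_vecD index_zero_vec(1) index_zero_vec(2))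
  have "0 < (cmod (a $ i))^2" using ai by simp
  also have "\<dots> \<le> (\<Sum>i<n. (cmod (a $ i))^2)" by (rule member_le_sum, use i in auto)
  finally show ?thesis .
qed

lemma sel_vec: fixes x :: "complex vec" assumes x: "x \<in> carrier_vec (Suc n)" and that: "\<And>i. i < n \<Longrightarrow> P i \<Longrightarrow> f i < Suc n"
  shows "mat n (Suc n) (\<lambda>(i,c). if c = f i \<and> P i then 1 else 0) *\<^sub>v x = vec n (\<lambda>i. if P i then x $ f i else 0)"
proof (rule eq_vecI)
  fix i assume "i < dim_vec (vec n (\<lambda>i. if P i then x $ f i else (0::complex)))"
  then have i: "i < n" by simp
  have "(mat n (Suc n) (\<lambda>(i,c). if c = f i \<and> P i then 1 else 0) *\<^sub>v x) $ i
      = (\<Sum>c = 0..<Suc n. (if c = f i \<and> P i then 1 else 0) * x $ c)"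
    using i x unfolding carrier_vec_def by (simp add: scalar_prod_def)
  also have "\<dots> = (\<Sum>c = 0..<Suc n. if c = f i then (if P i then x $ f i else 0) else 0)"
    by (rule sum.cong, auto)
  also have "\<dots> = (if P i then x $ f i else 0)" using that[OF i] by auto
  finally show "(mat n (Suc n) (\<lambda>(i,c). if c = f i \<and> P i then 1 else 0) *\<^sub>v x) $ i = vec n (\<lambda>i. if P i then x $ f i else 0) $ i"
    using i by simp
qed simp

lemma mat_vec_zero: "A \<in> carrier_mat nr nc \<Longrightarrow> A *\<^sub>v 0\<^sub>v nc = (0\<^sub>v nr :: complex vec)"
  by (rule eq_vecI, auto)

lemma arith_fin: fixes A B p lk mk e :: real
  assumes A: "0 < A" and B: "0 < B" and e: "0 \<le> e" and AB: "A \<le> B" and BA: "B \<le> (1 + e) * A"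
    and lp: "lk * A \<le> p" and pm: "p \<le> mk * B"
  shows "Fe e lk \<le> mk"
proof (cases "0 \<le> lk")
  case True
  have "lk * B \<le> lk * ((1 + e) * A)" by (rule mult_left_mono[OF BA True])
  also have "\<dots> = (1 + e) * (lk * A)" by simp
  also have "\<dots> \<le> (1 + e) * p" using lp e by (intro mult_left_mono) auto
  also have "\<dots> \<le> (1 + e) * (mk * B)" using pm e by (intro mult_left_mono) auto
  finally have "lk * B \<le> ((1 + e) * mk) * B" by simp
  then have "lk \<le> (1 + e) * mk" using B by simp
  then have "lk / (1 + e) \<le> mk" using e by (simp add: divide_le_eq mult.commute)
  then show ?thesis unfolding Fe_def using True by simp
next
  case False
  have "lk * B \<le> lk * A" using AB False by (intro mult_left_mono_neg) auto
  also have "\<dots> \<le> mk * B" using lp pm by simp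
  finally have "lk \<le> mk" using B by simp
  then show ?thesis unfolding Fe_def using False by simp
qed

lemma congr_inj: assumes P: "P \<in> carrier_mat n n" and M: "M \<in> carrier_mat n n" and PMP: "adj P * M * P = 1\<^sub>m n"
  and v: "v \<in> carrier_vec n" and Pv: "P *\<^sub>v v = 0\<^sub>v n"
  shows "v = 0\<^sub>v n"
proof -
  have "v = (adj P * M * P) *\<^sub>v v" using PMP v by simp
  also have "\<dots> = (adj P * M) *\<^sub>v (P *\<^sub>v v)" by (rule assoc_mult_mat_vec[of _ n n _ n], use P M v in auto)
  also have "\<dots> = 0\<^sub>v n" unfolding Pv
    by (rule mat_vec_zero, use P M in \<open>meson adj_carrier mult_carrier_mat\<close>)
  finally show ?thesis .
qed

lemma compare:
  fixes \<epsilon>2 :: real and l m :: "nat \<Rightarrow> real"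
  assumes C0: "\<chi>0 \<in> carrier_mat n n" and C: "\<chi> \<in> carrier_mat n n" and O: "\<omega> \<in> carrier_mat n n"
    and V0: "V0 \<in> carrier_mat n n" and V0C: "adj V0 * \<chi>0 * V0 = 1\<^sub>m n" and V0O: "adj V0 * \<omega> * V0 = diagc n l"
    and lmono: "\<And>i j. i \<le> j \<Longrightarrow> j < n \<Longrightarrow> l j \<le> l i"
    and V: "V \<in> carrier_mat n n" and VC: "adj V * \<chi> * V = 1\<^sub>m n" and VO: "adj V * \<omega> * V = diagc n m"
    and mmono: "\<And>i j. i \<le> j \<Longrightarrow> j < n \<Longrightarrow> m j \<le> m i"
    and low: "\<And>v. v \<in> carrier_vec n \<Longrightarrow> Re ((\<chi>0 *\<^sub>v v) \<bullet>c v) \<le> Re ((\<chi> *\<^sub>v v) \<bullet>c v)"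
    and up: "\<And>v. v \<in> carrier_vec n \<Longrightarrow> Re ((\<chi> *\<^sub>v v) \<bullet>c v) \<le> (1 + \<epsilon>2) * Re ((\<chi>0 *\<^sub>v v) \<bullet>c v)"
    and e2: "0 \<le> \<epsilon>2" and k: "k < n"
  shows "Fe \<epsilon>2 (l k) \<le> m k"
proof -
  define E1 :: "complex mat" where "E1 = mat n (Suc n) (\<lambda>(i,c). if c = i \<and> i \<le> k then 1 else 0)"
  define E2 :: "complex mat" where "E2 = mat n (Suc n) (\<lambda>(i,c). if c = Suc i \<and> k \<le> i then 1 else 0)"
  have E1: "E1 \<in> carrier_mat n (Suc n)" and E2: "E2 \<in> carrier_mat n (Suc n)" unfolding E1_def E2_def by auto
  define X where "X = V0 * E1 - V * E2"
  have V0E1: "V0 * E1 \<in> carrier_mat n (Suc n)" using V0 E1 by (meson mult_carrier_mat)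
  have VE2: "V * E2 \<in> carrier_mat n (Suc n)" using V E2 by (meson mult_carrier_mat)
  have X: "X \<in> carrier_mat n (Suc n)" unfolding X_def using V0E1 VE2 by (meson minus_carrier_mat)
  obtain x where x: "x \<in> carrier_vec (Suc n)" and x0: "x \<noteq> 0\<^sub>v (Suc n)" and Xx: "X *\<^sub>v x = 0\<^sub>v n"
    using wide_kernel[OF X] by blast
  define a where "a = E1 *\<^sub>v x"
  define b where "b = E2 *\<^sub>v x"
  have a_eq: "a = vec n (\<lambda>i. if i \<le> k then x $ i else 0)"
    unfolding a_def E1_def by (rule sel_vec[OF x], simp)
  have b_eq: "b = vec n (\<lambda>i. if k \<le> i then x $ Suc i else 0)"
    unfolding b_def E2_def by (rule sel_vec[OF x], simp)
  have a: "a \<in> carrier_vec n" and b: "b \<in> carrier_vec n" unfolding a_eq b_eq by auto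
  have "X *\<^sub>v x = (V0 * E1) *\<^sub>v x - (V * E2) *\<^sub>v x"
    unfolding X_def by (rule minus_mult_distrib_mat_vec[OF V0E1 VE2 x])
  also have "(V0 * E1) *\<^sub>v x = V0 *\<^sub>v a" unfolding a_def by (rule assoc_mult_mat_vec[OF V0 E1 x])
  also have "(V * E2) *\<^sub>v x = V *\<^sub>v b" unfolding b_def by (rule assoc_mult_mat_vec[OF V E2 x])
  finally have h: "V0 *\<^sub>v a - V *\<^sub>v b = 0\<^sub>v n" using Xx by simp
  have wab: "V0 *\<^sub>v a = V *\<^sub>v b"
  proof (rule eq_vecI)
    fix i assume "i < dim_vec (V *\<^sub>v b)"
    then have i: "i < n" using V by simp
    have "(V0 *\<^sub>v a - V *\<^sub>v b) $ i = 0" using h i by simp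
    then show "(V0 *\<^sub>v a) $ i = (V *\<^sub>v b) $ i" using i V0 V by simp
  qed (use V0 V in simp)
  define w where "w = V0 *\<^sub>v a"
  have w: "w \<in> carrier_vec n" unfolding w_def using V0 a by simp
  have ab0: "\<not> (a = 0\<^sub>v n \<and> b = 0\<^sub>v n)"
  proof
    assume ab: "a = 0\<^sub>v n \<and> b = 0\<^sub>v n"
    have "x = 0\<^sub>v (Suc n)"
    proof (rule eq_vecI)
      fix c assume "c < dim_vec (0\<^sub>v (Suc n) :: complex vec)"
      then have c: "c < Suc n" by simp
      show "x $ c = 0\<^sub>v (Suc n) $ c"
      proof (cases "c \<le> k")
        case True
        then have "c < n" using k by simp
        then have "a $ c = x $ c" unfolding a_eq using True by simp
        then show ?thesis using ab c \<open>c < n\<close> by simp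
      next
        case False
        then obtain j where j: "c = Suc j" "k \<le> j" by (cases c) auto
        then have "j < n" using c by simp
        then have "b $ j = x $ c" unfolding b_eq using j by simp
        then show ?thesis using ab c \<open>j < n\<close> by simp
      qed
    qed (use x in simp)
    then show False using x0 by simp
  qed
  have a0: "a \<noteq> 0\<^sub>v n"
  proof
    assume az: "a = 0\<^sub>v n"
    then have "V *\<^sub>v b = 0\<^sub>v n" using wab mat_vec_zero[OF V0] by simp
    then have "b = 0\<^sub>v n" by (rule congr_inj[OF V C VC b])
    then show False using ab0 az by simp
  qed
  have b0: "b \<noteq> 0\<^sub>v n"
  proof
    assume bz: "b = 0\<^sub>v n"
    then have "V0 *\<^sub>v a = 0\<^sub>v n" using wab mat_vec_zero[OF V] by simp
    then have "a = 0\<^sub>v n" by (rule congr_inj[OF V0 C0 V0C a])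
    then show False using ab0 bz by simp
  qed
  define A where "A = (\<Sum>i<n. (cmod (a $ i))^2)"
  define B where "B = (\<Sum>i<n. (cmod (b $ i))^2)"
  have q0: "Re ((\<chi>0 *\<^sub>v w) \<bullet>c w) = A" unfolding w_def qf_congr[OF V0 C0 a] V0C A_def by (rule one_form[OF a])
  have pA: "Re ((\<omega> *\<^sub>v w) \<bullet>c w) = (\<Sum>i<n. l i * (cmod (a $ i))^2)" unfolding w_def qf_congr[OF V0 O a] V0O
    by (rule diag_form[OF a])
  have q: "Re ((\<chi> *\<^sub>v w) \<bullet>c w) = B" unfolding w_def wab qf_congr[OF V C b] VC B_def by (rule one_form[OF b])
  have pB: "Re ((\<omega> *\<^sub>v w) \<bullet>c w) = (\<Sum>i<n. m i * (cmod (b $ i))^2)" unfolding w_def wab qf_congr[OF V O b] VO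
    by (rule diag_form[OF b])
  have A0: "0 < A" unfolding A_def by (rule sum_sq_pos[OF a a0])
  have B0: "0 < B" unfolding B_def by (rule sum_sq_pos[OF b b0])
  have lA: "l k * A \<le> Re ((\<omega> *\<^sub>v w) \<bullet>c w)" unfolding pA A_def sum_distrib_left
  proof (rule sum_mono)
    fix i assume "i \<in> {..<n}"
    then have i: "i < n" by simp
    show "l k * (cmod (a $ i))^2 \<le> l i * (cmod (a $ i))^2"
    proof (cases "i \<le> k")
      case True
      then show ?thesis using lmono[OF True k] by (intro mult_right_mono) auto
    next
      case False
      then have "a $ i = 0" unfolding a_eq using i by simp
      then show ?thesis by simp
    qed
  qed
  have mB: "Re ((\<omega> *\<^sub>v w) \<bullet>c w) \<le> m k * B" unfolding pB B_def sum_distrib_left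
  proof (rule sum_mono)
    fix i assume "i \<in> {..<n}"
    then have i: "i < n" by simp
    show "m i * (cmod (b $ i))^2 \<le> m k * (cmod (b $ i))^2"
    proof (cases "k \<le> i")
      case True
      then show ?thesis using mmono[OF True i] by (intro mult_right_mono) auto
    next
      case False
      then have "b $ i = 0" unfolding b_eq using i by simp
      then show ?thesis by simp
    qed
  qed
  have AB: "A \<le> B" using low[OF w] q0 q by simp
  have BA: "B \<le> (1 + \<epsilon>2) * A" using up[OF w] q0 q by simp
  show ?thesis by (rule arith_fin[OF A0 B0 e2 AB BA lA mB])
qed

lemma mult_unit_vec: fixes N :: "complex mat" assumes N: "N \<in> carrier_mat n n" and q: "q < n"
  shows "N *\<^sub>v unit_vec n q = col N q"
proof (rule eq_vecI)
  fix i assume "i < dim_vec (col N q)"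
  then have i: "i < n" using N by simp
  have "row N i \<bullet> unit_vec n q = row N i $ q" by (rule scalar_prod_right_unit[OF q])
  then show "(N *\<^sub>v unit_vec n q) $ i = col N q $ i" using i q N by simp
qed (use N in simp)

lemma conj_unit_vec: "conjugate (unit_vec n p :: complex vec) = unit_vec n p"
  by (rule eq_vecI, auto simp: unit_vec_def)

lemma perm_entry: assumes N: "N \<in> carrier_mat n n" and pi: "\<And>i. i < n \<Longrightarrow> \<pi> i < n"
  and i: "i < n" and j: "j < n" and Pd: "P = mat n n (\<lambda>(r,c). if r = \<pi> c then 1 else (0::complex))"
  shows "(adj P * N * P) $$ (i,j) = N $$ (\<pi> i, \<pi> j)"
proof -
  let ?P = "P"
  have cP: "c < n \<Longrightarrow> col ?P c = unit_vec n (\<pi> c)" for c unfolding Pd by (rule eq_vecI, auto simp: unit_vec_def)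
  have "(adj ?P * N * ?P) $$ (i,j) = (N *\<^sub>v col ?P j) \<bullet>c col ?P i"
    by (rule quad_entry[OF _ N i j], simp add: Pd)
  also have "\<dots> = col N (\<pi> j) \<bullet> unit_vec n (\<pi> i)"
    unfolding cP[OF i] cP[OF j] mult_unit_vec[OF N pi[OF j]] conj_unit_vec ..
  also have "\<dots> = N $$ (\<pi> i, \<pi> j)" using N pi[OF i] pi[OF j] by simp
  finally show ?thesis .
qed

lemma sort_basis: assumes V: "V \<in> carrier_mat n n" and M: "M \<in> carrier_mat n n" and O: "\<omega> \<in> carrier_mat n n"
  and VMV: "adj V * M * V = 1\<^sub>m n" and VOV: "adj V * \<omega> * V = diagc n \<mu>"
  shows "\<exists>V' \<mu>'. V' \<in> carrier_mat n n \<and> adj V' * M * V' = 1\<^sub>m n \<and> adj V' * \<omega> * V' = diagc n \<mu>' \<and>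
     (\<forall>i j. i \<le> j \<longrightarrow> j < n \<longrightarrow> \<mu>' j \<le> \<mu>' i)"
proof -
  define xs where "xs = sort_key (\<lambda>i. - \<mu> i) [0..<n]"
  define \<pi> where "\<pi> = (\<lambda>i. xs ! i)"
  have len: "length xs = n" unfolding xs_def by simp
  have setxs: "set xs = {0..<n}" unfolding xs_def by simp
  have dist: "distinct xs" unfolding xs_def by simp
  have sorted: "sorted (map (\<lambda>i. - \<mu> i) xs)" unfolding xs_def by simp
  have pi: "\<And>i. i < n \<Longrightarrow> \<pi> i < n" unfolding \<pi>_def using len setxs by (metis atLeastLessThan_iff nth_mem)
  have pinj: "\<And>i j. i < n \<Longrightarrow> j < n \<Longrightarrow> \<pi> i = \<pi> j \<longleftrightarrow> i = j"
    unfolding \<pi>_def using dist len by (simp add: nth_eq_iff_index_eq)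
  define P where "P = mat n n (\<lambda>(r,c). if r = \<pi> c then 1 else (0::complex))"
  have P: "P \<in> carrier_mat n n" unfolding P_def by simp
  have PP: "adj P * 1\<^sub>m n * P = 1\<^sub>m n"
  proof (rule eq_matI)
    fix i j assume "i < dim_row (1\<^sub>m n :: complex mat)" "j < dim_col (1\<^sub>m n :: complex mat)"
    then have i: "i < n" and j: "j < n" by auto
    show "(adj P * 1\<^sub>m n * P) $$ (i, j) = 1\<^sub>m n $$ (i, j)"
    proof -
      have e: "(adj P * 1\<^sub>m n * P) $$ (i,j) = 1\<^sub>m n $$ (\<pi> i, \<pi> j)"
        by (rule perm_entry[OF _ pi i j P_def], simp)
      show ?thesis unfolding e using i j pi[OF i] pi[OF j] pinj[OF i j] by simp
    qed
  qed (use P in auto)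
  have PD: "adj P * diagc n \<mu> * P = diagc n (\<lambda>i. \<mu> (\<pi> i))"
  proof (rule eq_matI)
    fix i j assume "i < dim_row (diagc n (\<lambda>i. \<mu> (\<pi> i)))" "j < dim_col (diagc n (\<lambda>i. \<mu> (\<pi> i)))"
    then have i: "i < n" and j: "j < n" by (auto simp: diagc_def)
    show "(adj P * diagc n \<mu> * P) $$ (i, j) = diagc n (\<lambda>i. \<mu> (\<pi> i)) $$ (i, j)"
    proof -
      have e: "(adj P * diagc n \<mu> * P) $$ (i,j) = diagc n \<mu> $$ (\<pi> i, \<pi> j)"
        by (rule perm_entry[OF _ pi i j P_def], simp)
      show ?thesis unfolding e using i j pi[OF i] pi[OF j] pinj[OF i j] by (simp add: diagc_def)
    qed
  qed (use P in \<open>auto simp: diagc_def\<close>)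
  define V' where "V' = V * P"
  have V': "V' \<in> carrier_mat n n" unfolding V'_def using V P by simp
  have "adj V' * M * V' = 1\<^sub>m n" unfolding V'_def congr_mult[OF V P M] VMV PP ..
  moreover have "adj V' * \<omega> * V' = diagc n (\<lambda>i. \<mu> (\<pi> i))" unfolding V'_def congr_mult[OF V P O] VOV PD ..
  moreover have "\<forall>i j. i \<le> j \<longrightarrow> j < n \<longrightarrow> \<mu> (\<pi> j) \<le> \<mu> (\<pi> i)"
  proof (intro allI impI)
    fix i j assume ij: "i \<le> j" and j: "j < n"
    have "map (\<lambda>i. - \<mu> i) xs ! i \<le> map (\<lambda>i. - \<mu> i) xs ! j"
      by (rule sorted_nth_mono[OF sorted ij], use j len in simp)
    then show "\<mu> (\<pi> j) \<le> \<mu> (\<pi> i)" unfolding \<pi>_def using ij j len by simp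
  qed
  ultimately show ?thesis using V' by blast
qed

lemma gamma_iff: assumes "rel_eigenvalues \<chi> \<omega> = mset (map (\<lambda>i. complex_of_real (g i)) [0..<n])"
  shows "in_Gamma \<chi> \<theta> \<omega> \<longleftrightarrow> (\<forall>i0<n. (\<Sum>i<n. arccot (g i)) - arccot (g i0) < \<theta>)"
proof -
  define M where "M = mset (map (\<lambda>i. complex_of_real (g i)) [0..<n])"
  define h where "h = (\<lambda>y. arccot (Re y))"
  have sumM: "sum_mset (image_mset h M) = (\<Sum>i<n. arccot (g i))"
    unfolding M_def h_def by (simp add: multiset.map_comp comp_def sum_unfold_sum_mset atLeast0LessThan)
  have rem: "sum_mset (image_mset h (M - {#x#})) = sum_mset (image_mset h M) - h x" if x: "x \<in># M" for x
  proof -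
    have "M = add_mset x (M - {#x#})" using x by simp
    then have "sum_mset (image_mset h M) = h x + sum_mset (image_mset h (M - {#x#}))"
      by (metis image_mset_add_mset sum_mset.insert)
    then show ?thesis by simp
  qed
  have "in_Gamma \<chi> \<theta> \<omega> \<longleftrightarrow> (\<forall>x\<in>#M. sum_mset (image_mset h M) - h x < \<theta>)"
    unfolding in_Gamma_def Let_def assms M_def[symmetric] h_def[symmetric] using rem by simp
  also have "\<dots> \<longleftrightarrow> (\<forall>i0<n. (\<Sum>i<n. arccot (g i)) - arccot (g i0) < \<theta>)"
    unfolding sumM unfolding M_def h_def by auto
  finally show ?thesis .
qed

lemma smult_mat_vec: assumes A: "(A :: complex mat) \<in> carrier_mat n n" and v: "v \<in> carrier_vec n"
  shows "(c \<cdot>\<^sub>m A) *\<^sub>v v = c \<cdot>\<^sub>v (A *\<^sub>v v)"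
proof (rule eq_vecI)
  fix i assume "i < dim_vec (c \<cdot>\<^sub>v (A *\<^sub>v v))"
  then have i: "i < n" using A by simp
  have "row (c \<cdot>\<^sub>m A) i = c \<cdot>\<^sub>v row A i" by (rule eq_vecI, use A i in auto)
  then show "((c \<cdot>\<^sub>m A) *\<^sub>v v) $ i = (c \<cdot>\<^sub>v (A *\<^sub>v v)) $ i"
    using A i v by (simp add: smult_scalar_prod_distrib[of _ n])
qed (use A in simp)

lemma form_minus: assumes A: "(A :: complex mat) \<in> carrier_mat n n" and B: "B \<in> carrier_mat n n" and v: "v \<in> carrier_vec n"
  shows "((A - B) *\<^sub>v v) \<bullet>c v = (A *\<^sub>v v) \<bullet>c v - (B *\<^sub>v v) \<bullet>c v"
proof -
  have "(A - B) *\<^sub>v v = A *\<^sub>v v - B *\<^sub>v v" by (rule minus_mult_distrib_mat_vec[OF A B v])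
  then show ?thesis using A B v by (simp add: minus_scalar_prod_distrib[of _ n])
qed

lemma form_smult: assumes A: "(A :: complex mat) \<in> carrier_mat n n" and v: "v \<in> carrier_vec n"
  shows "((c \<cdot>\<^sub>m A) *\<^sub>v v) \<bullet>c v = c * ((A *\<^sub>v v) \<bullet>c v)"
  unfolding smult_mat_vec[OF A v] using A v by (simp add: smult_scalar_prod_distrib[of _ n])

theorem lemma2p5:
  fixes n :: nat and \<theta> \<epsilon>\<^sub>1 :: real
  assumes "n \<ge> 1" and "0 < \<theta>" and "\<theta> < pi" and "\<epsilon>\<^sub>1 > 0"
  shows "\<exists>\<epsilon>\<^sub>2 > 0. \<forall>\<chi>\<^sub>0 \<omega> \<chi> :: complex mat.
           pos_def n \<chi>\<^sub>0 \<longrightarrow> hermitian n \<omega> \<longrightarrow> in_Gamma \<chi>\<^sub>0 \<theta> \<omega> \<longrightarrow>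
           hermitian n \<chi> \<longrightarrow> loewner_le n \<chi>\<^sub>0 \<chi> \<longrightarrow>
           loewner_le n \<chi> (complex_of_real (1 + \<epsilon>\<^sub>2) \<cdot>\<^sub>m \<chi>\<^sub>0) \<longrightarrow>
           in_Gamma \<chi> \<theta> (\<omega> + complex_of_real (2 * \<epsilon>\<^sub>1) \<cdot>\<^sub>m \<chi>)"
proof -
  obtain e2 where e2: "e2 > 0" and AN: "\<forall>(I::nat set) l m. finite I \<longrightarrow> card I \<le> n \<longrightarrow> (\<Sum>i\<in>I. arccot (l i)) < \<theta> \<longrightarrow>
           (\<forall>i\<in>I. Fe e2 (l i) \<le> m i) \<longrightarrow> (\<Sum>i\<in>I. arccot (m i + 2 * \<epsilon>\<^sub>1)) < \<theta>"
    using analytic[OF assms(2,3,4), of n] by blast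
  show ?thesis
  proof (intro exI[of _ e2] conjI allI impI)
    show "0 < e2" by (rule e2)
    fix \<chi>0 \<omega> \<chi> :: "complex mat"
    assume pd: "pos_def n \<chi>0" and hO: "hermitian n \<omega>" and G0: "in_Gamma \<chi>0 \<theta> \<omega>" and hC: "hermitian n \<chi>"
      and L1: "loewner_le n \<chi>0 \<chi>" and L2: "loewner_le n \<chi> (complex_of_real (1 + e2) \<cdot>\<^sub>m \<chi>0)"
    have C0: "\<chi>0 \<in> carrier_mat n n" using pd by (simp add: pos_def_def hermitian_def)
    have C: "\<chi> \<in> carrier_mat n n" using hC by (simp add: hermitian_def)
    have O: "\<omega> \<in> carrier_mat n n" using hO by (simp add: hermitian_def)
    have low: "Re ((\<chi>0 *\<^sub>v v) \<bullet>c v) \<le> Re ((\<chi> *\<^sub>v v) \<bullet>c v)" if v: "v \<in> carrier_vec n" for v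
    proof -
      have "0 \<le> Re (((\<chi> - \<chi>0) *\<^sub>v v) \<bullet>c v)" using L1 v unfolding loewner_le_def psd_def by blast
      then show ?thesis unfolding form_minus[OF C C0 v] by simp
    qed
    have up: "Re ((\<chi> *\<^sub>v v) \<bullet>c v) \<le> (1 + e2) * Re ((\<chi>0 *\<^sub>v v) \<bullet>c v)" if v: "v \<in> carrier_vec n" for v
    proof -
      have C0': "complex_of_real (1 + e2) \<cdot>\<^sub>m \<chi>0 \<in> carrier_mat n n" using C0 by simp
      have "0 \<le> Re (((complex_of_real (1 + e2) \<cdot>\<^sub>m \<chi>0 - \<chi>) *\<^sub>v v) \<bullet>c v)"
        using L2 v unfolding loewner_le_def psd_def by blast
      then show ?thesis unfolding form_minus[OF C0' C v] form_smult[OF C0 v] by simp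
    qed
    have pdC: "pos_def n \<chi>" unfolding pos_def_def
    proof (intro conjI ballI impI)
      fix v :: "complex vec" assume v: "v \<in> carrier_vec n" and v0: "v \<noteq> 0\<^sub>v n"
      have "0 < Re ((\<chi>0 *\<^sub>v v) \<bullet>c v)" using pd v v0 unfolding pos_def_def by blast
      then show "0 < Re ((\<chi> *\<^sub>v v) \<bullet>c v)" using low[OF v] by simp
    qed (rule hC)
    obtain V0a la where V0a: "V0a \<in> carrier_mat n n" and V0aC: "adj V0a * \<chi>0 * V0a = 1\<^sub>m n"
      and V0aO: "adj V0a * \<omega> * V0a = diagc n la"
      using gen_spectral[OF pd hO] by blast
    obtain V0 l where V0: "V0 \<in> carrier_mat n n" and V0C: "adj V0 * \<chi>0 * V0 = 1\<^sub>m n"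
      and V0O: "adj V0 * \<omega> * V0 = diagc n l" and lmono: "\<forall>i j. i \<le> j \<longrightarrow> j < n \<longrightarrow> l j \<le> l i"
      using sort_basis[OF V0a C0 O V0aC V0aO] by blast
    obtain Va ma where Va: "Va \<in> carrier_mat n n" and VaC: "adj Va * \<chi> * Va = 1\<^sub>m n"
      and VaO: "adj Va * \<omega> * Va = diagc n ma"
      using gen_spectral[OF pdC hO] by blast
    obtain V m where V: "V \<in> carrier_mat n n" and VC: "adj V * \<chi> * V = 1\<^sub>m n"
      and VO: "adj V * \<omega> * V = diagc n m" and mmono: "\<forall>i j. i \<le> j \<longrightarrow> j < n \<longrightarrow> m j \<le> m i"
      using sort_basis[OF Va C O VaC VaO] by blast
    have R0: "rel_eigenvalues \<chi>0 \<omega> = mset (map (\<lambda>i. complex_of_real (l i)) [0..<n])"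
      by (rule rel_eig[OF C0 O V0 V0C V0O])
    have G0': "\<forall>i0<n. (\<Sum>i<n. arccot (l i)) - arccot (l i0) < \<theta>" using G0 unfolding gamma_iff[OF R0] .
    define \<omega>' where "\<omega>' = \<omega> + complex_of_real (2 * \<epsilon>\<^sub>1) \<cdot>\<^sub>m \<chi>"
    have cC: "complex_of_real (2 * \<epsilon>\<^sub>1) \<cdot>\<^sub>m \<chi> \<in> carrier_mat n n" using C by simp
    have O': "\<omega>' \<in> carrier_mat n n" unfolding \<omega>'_def using O cC by simp
    have aV: "adj V \<in> carrier_mat n n" using V by simp
    have VO': "adj V * \<omega>' * V = diagc n (\<lambda>i. m i + 2 * \<epsilon>\<^sub>1)"
    proof -
      have "adj V * \<omega>' = adj V * \<omega> + adj V * (complex_of_real (2 * \<epsilon>\<^sub>1) \<cdot>\<^sub>m \<chi>)"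
        unfolding \<omega>'_def by (rule mult_add_distrib_mat[OF aV O cC])
      also have "adj V * (complex_of_real (2 * \<epsilon>\<^sub>1) \<cdot>\<^sub>m \<chi>) = complex_of_real (2 * \<epsilon>\<^sub>1) \<cdot>\<^sub>m (adj V * \<chi>)"
        by (rule mult_smult_distrib[OF aV C])
      finally have e1: "adj V * \<omega>' * V = (adj V * \<omega> + complex_of_real (2 * \<epsilon>\<^sub>1) \<cdot>\<^sub>m (adj V * \<chi>)) * V" by simp
      have aVO: "adj V * \<omega> \<in> carrier_mat n n" using aV O by (meson mult_carrier_mat)
      have aVC: "adj V * \<chi> \<in> carrier_mat n n" using aV C by (meson mult_carrier_mat)
      have "(adj V * \<omega> + complex_of_real (2 * \<epsilon>\<^sub>1) \<cdot>\<^sub>m (adj V * \<chi>)) * V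
          = adj V * \<omega> * V + (complex_of_real (2 * \<epsilon>\<^sub>1) \<cdot>\<^sub>m (adj V * \<chi>)) * V"
        by (rule add_mult_distrib_mat[OF aVO _ V], use aVC in simp)
      also have "(complex_of_real (2 * \<epsilon>\<^sub>1) \<cdot>\<^sub>m (adj V * \<chi>)) * V = complex_of_real (2 * \<epsilon>\<^sub>1) \<cdot>\<^sub>m (adj V * \<chi> * V)"
        by (rule mult_smult_assoc_mat[OF aVC V])
      finally have "adj V * \<omega>' * V = diagc n m + complex_of_real (2 * \<epsilon>\<^sub>1) \<cdot>\<^sub>m 1\<^sub>m n"
        using e1 VO VC by simp
      also have "\<dots> = diagc n (\<lambda>i. m i + 2 * \<epsilon>\<^sub>1)" by (rule eq_matI, auto simp: diagc_def)
      finally show ?thesis .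
    qed
    have R: "rel_eigenvalues \<chi> \<omega>' = mset (map (\<lambda>i. complex_of_real (m i + 2 * \<epsilon>\<^sub>1)) [0..<n])"
      by (rule rel_eig[OF C O' V VC VO'])
    have "in_Gamma \<chi> \<theta> \<omega>'" unfolding gamma_iff[OF R]
    proof (intro allI impI)
      fix j0 assume j0: "j0 < n"
      define I where "I = {..<n} - {j0}"
      have fI: "finite I" unfolding I_def by simp
      have cI: "card I \<le> n" unfolding I_def by (metis card_Diff1_le card_lessThan finite_lessThan)
      have sI: "(\<Sum>i\<in>I. arccot (l i)) < \<theta>" unfolding I_def using G0' j0 by (simp add: sum_diff1)
      have FI: "\<forall>i\<in>I. Fe e2 (l i) \<le> m i"
      proof
        fix i assume "i \<in> I"
        then have i: "i < n" unfolding I_def by simp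
        show "Fe e2 (l i) \<le> m i"
          by (rule compare[OF C0 C O V0 V0C V0O _ V VC VO _ low up _ i], use lmono mmono e2 in auto)
      qed
      have "(\<Sum>i\<in>I. arccot (m i + 2 * \<epsilon>\<^sub>1)) < \<theta>" using AN fI cI sI FI by blast
      then show "(\<Sum>i<n. arccot (m i + 2 * \<epsilon>\<^sub>1)) - arccot (m j0 + 2 * \<epsilon>\<^sub>1) < \<theta>"
        unfolding I_def using j0 by (simp add: sum_diff1)
    qed
    then show "in_Gamma \<chi> \<theta> (\<omega> + complex_of_real (2 * \<epsilon>\<^sub>1) \<cdot>\<^sub>m \<chi>)" unfolding \<omega>'_def .
  qed
qed

end
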